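(* Let $B\in\mathbb R^{n\times n}$ be symmetric positive semidefinite, let $T\ge1$ be an integer and $\alpha>0$ with $\alpha<1/\rho(B)$ (so that $I-\alpha B$ is positive definite). Define $C=\sum_{t=0}^{T-1}(I-\alpha B)^t$. Then $C$ is invertible and symmetric; and with $M=C^{-1}(I-\alpha B)^T$ and $N=\frac{1}{\alpha}(C^{-1}-M)$, the matrix $N$ is symmetric positive semidefinite and $M$ is symmetric positive definite with \[\frac{(1-\alpha\rho(B))^T}{\sum_{t=0}^{T-1}(1-\alpha\rho(B))^t}I\preceq M\preceq\frac{1}{T}I.\]
   Context: $\rho(B)$ denotes the largest eigenvalue of $B$ (if $B=0$, $1/\rho(B)=\infty$). For symmetric matrices, $S_1\preceq S_2$ means $S_2-S_1$ is positive semidefinite. *)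

theory Defs
  imports "HOL-Analysis.Analysis"
begin

primrec matpow :: "real^'n^'n \<Rightarrow> nat \<Rightarrow> real^'n^'n" where
  "matpow A 0 = mat 1"
| "matpow A (Suc k) = A ** matpow A k"

definition symmetric_mat :: "real^'n^'n \<Rightarrow> bool" where
  "symmetric_mat A \<longleftrightarrow> transpose A = A"

definition psd :: "real^'n^'n \<Rightarrow> bool" where
  "psd A \<longleftrightarrow> symmetric_mat A \<and> (\<forall>x. 0 \<le> x \<bullet> (A *v x))"

definition pd :: "real^'n^'n \<Rightarrow> bool" where
  "pd A \<longleftrightarrow> symmetric_mat A \<and> (\<forall>x. x \<noteq> 0 \<longrightarrow> 0 < x \<bullet> (A *v x))"

definition loewner_le :: "real^'n^'n \<Rightarrow> real^'n^'n \<Rightarrow> bool" where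
  "loewner_le S1 S2 \<longleftrightarrow> psd (S2 - S1)"

definition is_eigenvalue :: "real^'n^'n \<Rightarrow> real \<Rightarrow> bool" where
  "is_eigenvalue A l \<longleftrightarrow> (\<exists>v. v \<noteq> 0 \<and> A *v v = l *\<^sub>R v)"

definition rho :: "real^'n^'n \<Rightarrow> real" where
  "rho A = Max {l. is_eigenvalue A l}"

end

theory Submission
  imports Defs
begin

lemma mv_scaleR: "(A::real^'n^'n) *v (c *\<^sub>R x) = c *\<^sub>R (A *v x)"
  by (simp add: vec_eq_iff matrix_vector_mult_def sum_distrib_left algebra_simps)

lemma mv_diff: "((A::real^'n^'n) - B) *v x = A *v x - B *v x"
  by (simp add: vec_eq_iff matrix_vector_mult_def sum_subtractf algebra_simps)
lemma mv_add: "((A::real^'n^'n) + B) *v x = A *v x + B *v x"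
  by (simp add: vec_eq_iff matrix_vector_mult_def sum.distrib algebra_simps)
lemma mv_scale: "((c::real) *\<^sub>R (A::real^'n^'n)) *v x = c *\<^sub>R (A *v x)"
  by (simp add: vec_eq_iff matrix_vector_mult_def sum_distrib_left algebra_simps)
lemma mv_sum: "(\<Sum>t\<in>S. (P t::real^'n^'n)) *v x = (\<Sum>t\<in>S. P t *v x)"
  by (induction S rule: infinite_finite_induct) (auto simp: mv_add)

lemma sym_inner:
  assumes "transpose (P::real^'n^'n) = P"
  shows "x \<bullet> (P *v y) = (P *v x) \<bullet> y"
proof -
  have "x \<bullet> (P *v y) = (x v* P) \<bullet> y" by (simp add: dot_lmul_matrix)
  also have "x v* P = transpose P *v x"
    by (simp add: vec_eq_iff vector_matrix_mult_def matrix_vector_mult_def transpose_def mult.commute)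
  finally show ?thesis using assms by simp
qed

lemma K:
  fixes P :: "real^'n^'n"
  assumes sym: "transpose P = P" and V: "subspace V"
    and inv: "\<forall>x\<in>V. P *v x \<in> V" and nn: "\<forall>x\<in>V. 0 \<le> x \<bullet> (P *v x)"
    and u: "u \<in> V" and u0: "u \<bullet> (P *v u) = 0"
  shows "P *v u = 0"
proof -
  define y where "y = P *v u"
  have yV: "y \<in> V" using inv u y_def by auto
  define a where "a = y \<bullet> y"
  define c where "c = y \<bullet> (P *v y)"
  have c0: "c \<ge> 0" using nn yV c_def by auto
  have uy: "u \<bullet> (P *v y) = a" using sym_inner[OF sym] a_def y_def by simp
  have yu: "y \<bullet> (P *v u) = a" using a_def y_def by simp
  have key: "0 \<le> 2 * t * a + t^2 * c" for t
  proof -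
    have "u + t *\<^sub>R y \<in> V" using V u yV by (simp add: subspace_add subspace_scale)
    then have "0 \<le> (u + t *\<^sub>R y) \<bullet> (P *v (u + t *\<^sub>R y))" using nn by blast
    also have "\<dots> = u \<bullet> (P *v u) + t * (u \<bullet> (P *v y)) + t * (y \<bullet> (P *v u)) + t^2 * (y \<bullet> (P *v y))"
      by (simp add: matrix_vector_right_distrib mv_scaleR inner_add_left inner_add_right power2_eq_square algebra_simps)
    finally show ?thesis using u0 uy yu c_def by (simp add: algebra_simps)
  qed
  have c1: "c + 1 > 0" using c0 by simp
  have "0 \<le> 2 * (- a/(c+1)) * a + (- a/(c+1))^2 * c" by (rule key)
  also have "\<dots> = -(a^2 * (c + 2)) / (c+1)^2"
  proof -
    have ne: "c + 1 \<noteq> 0" using c1 by simp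
    show ?thesis using ne by (simp add: divide_simps power2_eq_square) (simp add: algebra_simps)
  qed
  finally have "a^2 * (c+2) \<le> 0" using c1 by (simp add: divide_le_0_iff)
  moreover have "c + 2 > 0" using c0 by simp
  ultimately have "a^2 \<le> 0" by (simp add: mult_le_0_iff)
  then have "a = 0" by simp
  then show ?thesis using a_def y_def by simp
qed

lemma minform:
  fixes A :: "real^'n^'n"
  assumes V: "subspace V" and w: "w \<in> V" "w \<noteq> 0"
  shows "\<exists>u\<in>V. norm u = 1 \<and> (\<forall>x\<in>V. (u \<bullet> (A *v u)) * (x \<bullet> x) \<le> x \<bullet> (A *v x))"
proof -
  let ?S = "V \<inter> sphere 0 1"
  have cS: "compact ?S" by (intro closed_Int_compact closed_subspace V compact_sphere)
  have "w /\<^sub>R norm w \<in> ?S" using w V by (simp add: subspace_scale)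
  then have ne: "?S \<noteq> {}" by blast
  have ct: "continuous_on ?S (\<lambda>x. x \<bullet> (A *v x))"
    by (intro continuous_on_inner continuous_on_id matrix_vector_mult_linear_continuous_on[unfolded comp_def])
  obtain u where uS: "u \<in> ?S" and umin: "\<forall>y\<in>?S. u \<bullet> (A *v u) \<le> y \<bullet> (A *v y)"
    using continuous_attains_inf[OF cS ne ct] by blast
  have "(u \<bullet> (A *v u)) * (x \<bullet> x) \<le> x \<bullet> (A *v x)" if xV: "x \<in> V" for x
  proof (cases "x = 0")
    case True then show ?thesis by simp
  next
    case False
    define z where "z = x /\<^sub>R norm x"
    have "z \<in> ?S" using xV False V by (simp add: z_def subspace_scale)
    then have "u \<bullet> (A *v u) \<le> z \<bullet> (A *v z)" using umin by blast
    also have "z \<bullet> (A *v z) = (x \<bullet> (A *v x)) / (norm x)^2"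
      by (simp add: z_def mv_scaleR power2_eq_square divide_inverse)
    finally have "u \<bullet> (A *v u) \<le> (x \<bullet> (A *v x)) / (norm x)^2" .
    moreover have "(norm x)^2 > 0" using False by simp
    ultimately have "(u \<bullet> (A *v u)) * (norm x)^2 \<le> x \<bullet> (A *v x)"
      by (simp add: pos_le_divide_eq)
    then show ?thesis by (simp add: power2_norm_eq_inner)
  qed
  then show ?thesis using uS by auto
qed

lemma L1:
  fixes A :: "real^'n^'n"
  assumes sym: "transpose A = A" and V: "subspace V" and inv: "\<forall>x\<in>V. A *v x \<in> V"
    and w: "w \<in> V" "w \<noteq> 0"
  shows "\<exists>v l. v \<in> V \<and> v \<noteq> 0 \<and> A *v v = l *\<^sub>R v"
proof -
  obtain u where uV: "u \<in> V" and un: "norm u = 1"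
    and umin: "\<forall>x\<in>V. (u \<bullet> (A *v u)) * (x \<bullet> x) \<le> x \<bullet> (A *v x)"
    using minform[OF V w] by blast
  define m where "m = u \<bullet> (A *v u)"
  define P where "P = A - m *\<^sub>R mat 1"
  have Px: "P *v x = A *v x - m *\<^sub>R x" for x
    by (simp add: P_def mv_diff mv_scale)
  have symP: "transpose P = P" using sym by (simp add: P_def transpose_def vec_eq_iff mat_def)
  have invP: "\<forall>x\<in>V. P *v x \<in> V" using inv V by (simp add: Px subspace_diff subspace_scale)
  have nnP: "\<forall>x\<in>V. 0 \<le> x \<bullet> (P *v x)" using umin by (simp add: Px m_def inner_diff_right)
  have "u \<bullet> u = 1" using un by (simp add: norm_eq_1)
  then have "u \<bullet> (P *v u) = 0" by (simp add: Px m_def inner_diff_right)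
  from K[OF symP V invP nnP uV this] have "A *v u = m *\<^sub>R u" by (simp add: Px)
  moreover have "u \<noteq> 0" using un by auto
  ultimately show ?thesis using uV by blast
qed

lemma mainlem:
  fixes A Q :: "real^'n^'n"
  assumes symA: "transpose A = A" and symQ: "transpose Q = Q"
    and comm: "\<And>x. A *v (Q *v x) = Q *v (A *v x)"
    and hyp: "\<And>v l m. v \<noteq> 0 \<Longrightarrow> A *v v = l *\<^sub>R v \<Longrightarrow> Q *v v = m *\<^sub>R v \<Longrightarrow> c \<le> m"
  shows "c * (x \<bullet> x) \<le> x \<bullet> (Q *v x)"
proof -
  obtain k :: 'n where True by blast
  have ax: "axis k (1::real) \<noteq> 0" by (simp add: axis_eq_0_iff)
  obtain u where un: "norm u = 1"
    and umin: "\<forall>x\<in>UNIV. (u \<bullet> (Q *v u)) * (x \<bullet> x) \<le> x \<bullet> (Q *v x)"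
    using minform[OF subspace_UNIV _ ax, of Q] by blast
  define m where "m = u \<bullet> (Q *v u)"
  define P where "P = Q - m *\<^sub>R mat 1"
  have Px: "P *v x = Q *v x - m *\<^sub>R x" for x
    by (simp add: P_def mv_diff mv_scale)
  have symP: "transpose P = P" using symQ by (simp add: P_def transpose_def vec_eq_iff mat_def)
  have nnP: "\<forall>x\<in>UNIV. 0 \<le> x \<bullet> (P *v x)" using umin by (simp add: Px m_def inner_diff_right)
  have "u \<bullet> u = 1" using un by (simp add: norm_eq_1)
  then have "u \<bullet> (P *v u) = 0" by (simp add: Px m_def inner_diff_right)
  from K[OF symP subspace_UNIV _ nnP _ this] have Qu: "Q *v u = m *\<^sub>R u" by (simp add: Px)
  define W where "W = {x. Q *v x = m *\<^sub>R x}"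
  have W: "subspace W" unfolding subspace_def W_def
    by (simp add: matrix_vector_right_distrib mv_scaleR scaleR_add_right)
  have invW: "\<forall>x\<in>W. A *v x \<in> W" by (simp add: W_def mv_scaleR flip: comm)
  have "u \<in> W" "u \<noteq> 0" using Qu un by (auto simp: W_def)
  from L1[OF symA W invW this] obtain v l where "v \<in> W" "v \<noteq> 0" "A *v v = l *\<^sub>R v" by blast
  then have cm: "c \<le> m" using hyp by (auto simp: W_def)
  have "c * (x \<bullet> x) \<le> m * (x \<bullet> x)" using cm by (simp add: mult_right_mono)
  also have "\<dots> \<le> x \<bullet> (Q *v x)" using umin m_def by simp
  finally show ?thesis .
qed

lemma tr_add: "transpose ((A::real^'n^'n) + B) = transpose A + transpose B"
  by (simp add: vec_eq_iff transpose_def)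
lemma tr_diff: "transpose ((A::real^'n^'n) - B) = transpose A - transpose B"
  by (simp add: vec_eq_iff transpose_def)
lemma tr_sum: "transpose (\<Sum>t\<in>S. (P t::real^'n^'n)) = (\<Sum>t\<in>S. transpose (P t))"
proof (induction S rule: infinite_finite_induct)
  case (infinite A) then show ?case by (simp add: vec_eq_iff transpose_def)
next
  case empty then show ?case by (simp add: vec_eq_iff transpose_def)
next
  case (insert x F) then show ?case by (simp add: tr_add)
qed

lemma mp_vec: "matpow A (Suc k) *v y = A *v (matpow A k *v y)"
  by (simp add: matrix_vector_mul_assoc)

lemma comm_pow:
  assumes "\<And>y. X *v (A *v y) = A *v (X *v y)"
  shows "X *v (matpow A k *v y) = matpow A k *v (X *v (y::real^'n))"
  by (induction k arbitrary: y) (simp_all add: assms flip: matrix_vector_mul_assoc)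

lemma mp_eig:
  assumes "A *v v = l *\<^sub>R v"
  shows "matpow A k *v v = (l^k) *\<^sub>R (v::real^'n)"
  by (induction k) (simp_all add: assms mv_scaleR flip: matrix_vector_mul_assoc)

lemma mp_sym:
  assumes "transpose A = (A::real^'n^'n)"
  shows "transpose (matpow A k) = matpow A k"
proof (induction k)
  case 0 then show ?case by (simp add: transpose_mat)
next
  case (Suc k)
  have "matpow A k ** A = A ** matpow A k"
    unfolding matrix_eq using comm_pow[of A A k]
    by (simp flip: matrix_vector_mul_assoc)
  then show ?case using Suc assms by (simp add: matrix_transpose_mul)
qed

lemma eig_finite:
  fixes B :: "real^'n^'n"
  assumes "transpose B = B"
  shows "finite {l. is_eigenvalue B l}"
proof -
  let ?E = "{l. is_eigenvalue B l}"
  define f where "f l = (SOME v. v \<noteq> 0 \<and> B *v v = l *\<^sub>R v)" for l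
  have f: "f l \<noteq> 0 \<and> B *v f l = l *\<^sub>R f l" if "l \<in> ?E" for l
  proof -
    from that obtain w where "w \<noteq> 0 \<and> B *v w = l *\<^sub>R w" unfolding is_eigenvalue_def by blast
    then show ?thesis unfolding f_def by (rule someI)
  qed
  have inj: "inj_on f ?E"
  proof (rule inj_onI)
    fix x y assume x: "x \<in> ?E" and y: "y \<in> ?E" and e: "f x = f y"
    have "x *\<^sub>R f x = y *\<^sub>R f x" using f[OF x] f[OF y] e by metis
    then show "x = y" using f[OF x] by simp
  qed
  have "pairwise orthogonal (f ` ?E)"
    unfolding pairwise_def
  proof (intro ballI impI)
    fix a b assume "a \<in> f ` ?E" "b \<in> f ` ?E" and ne0: "a \<noteq> b"
    then obtain x y where x: "x \<in> ?E" and y: "y \<in> ?E" and ab: "a = f x" "b = f y" by blast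
    have ne: "f x \<noteq> f y" using ne0 ab by simp
    have "x * (f x \<bullet> f y) = (B *v f x) \<bullet> f y" using f[OF x] by simp
    also have "\<dots> = f x \<bullet> (B *v f y)" by (rule sym_inner[OF assms, symmetric])
    also have "\<dots> = y * (f x \<bullet> f y)" using f[OF y] by simp
    finally have "(x - y) * (f x \<bullet> f y) = 0" by (simp add: algebra_simps)
    moreover have "x \<noteq> y" using ne by auto
    ultimately show "orthogonal a b" by (simp add: orthogonal_def ab)
  qed
  then have "finite (f ` ?E)" by (rule pairwise_orthogonal_imp_finite)
  then show ?thesis using inj finite_imageD by blast
qed

lemma eig_bound:
  fixes B :: "real^'n^'n"
  assumes sB: "symmetric_mat B" and pB: "psd B" and a: "\<alpha> > 0"
    and v: "v \<noteq> 0" and Av: "(mat 1 - \<alpha> *\<^sub>R B) *v v = l *\<^sub>R v"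
  shows "1 - \<alpha> * rho B \<le> l \<and> l \<le> 1"
proof -
  define \<beta> where "\<beta> = (1 - l) / \<alpha>"
  have "v - \<alpha> *\<^sub>R (B *v v) = l *\<^sub>R v" using Av by (simp add: mv_diff mv_scale)
  then have "\<alpha> *\<^sub>R (B *v v) = (1 - l) *\<^sub>R v" by (simp add: algebra_simps)
  then have "(1/\<alpha>) *\<^sub>R (\<alpha> *\<^sub>R (B *v v)) = (1/\<alpha>) *\<^sub>R ((1 - l) *\<^sub>R v)" by simp
  then have Bv: "B *v v = \<beta> *\<^sub>R v" using a by (simp add: \<beta>_def)
  then have ev: "is_eigenvalue B \<beta>" using v unfolding is_eigenvalue_def by blast
  have "finite {l. is_eigenvalue B l}" using sB eig_finite unfolding symmetric_mat_def by blast
  then have "\<beta> \<le> rho B" using ev unfolding rho_def by (simp add: Max_ge)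
  moreover have "0 \<le> \<beta>"
  proof -
    have "0 \<le> v \<bullet> (B *v v)" using pB unfolding psd_def by blast
    also have "\<dots> = \<beta> * (v \<bullet> v)" using Bv by simp
    finally have "0 \<le> \<beta> * (v \<bullet> v)" .
    moreover have "0 < v \<bullet> v" using v by simp
    ultimately show ?thesis
    proof -
      assume h1: "0 \<le> \<beta> * (v \<bullet> v)" and h2: "0 < v \<bullet> v"
      show ?thesis
      proof (rule ccontr)
        assume "\<not> 0 \<le> \<beta>"
        then have "\<beta> * (v \<bullet> v) < 0" using h2 by (simp add: mult_neg_pos)
        then show False using h1 by linarith
      qed
    qed
  qed
  moreover have "l = 1 - \<alpha> * \<beta>" using a by (simp add: \<beta>_def)
  moreover have "\<alpha> * \<beta> \<le> \<alpha> * rho B" if "\<beta> \<le> rho B" using a that by (simp add: mult_left_mono)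
  ultimately show ?thesis using a by (smt (verit) mult_nonneg_nonneg)
qed


lemma R1:
  assumes "0 \<le> (l::real)" "1 \<le> T"
  shows "1 \<le> (\<Sum>t<T. l^t)"
proof -
  have "l^0 \<le> (\<Sum>t<T. l^t)"
    by (rule member_le_sum) (use assms in auto)
  then show ?thesis by simp
qed

lemma R3:
  assumes "0 \<le> (l::real)" "l \<le> 1"
  shows "real T * l^T \<le> (\<Sum>t<T. l^t)"
proof -
  have "real T * l^T = (\<Sum>t<T. l^T)" by simp
  also have "\<dots> \<le> (\<Sum>t<T. l^t)"
    by (rule sum_mono) (use assms in \<open>auto intro: power_decreasing\<close>)
  finally show ?thesis .
qed

lemma R4:
  assumes "0 < (m::real)" "m \<le> l"
  shows "m^T * (\<Sum>t<T. l^t) \<le> l^T * (\<Sum>t<T. m^t)"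
proof -
  have "m^T * (\<Sum>t<T. l^t) = (\<Sum>t<T. m^T * l^t)" by (simp add: sum_distrib_left)
  also have "\<dots> \<le> (\<Sum>t<T. l^T * m^t)"
  proof (rule sum_mono)
    fix t assume "t \<in> {..<T}"
    then have tT: "T = (T - t) + t" by simp
    have "m^(T-t) \<le> l^(T-t)" using assms by (simp add: power_mono)
    then have "m^(T-t) * (m^t * l^t) \<le> l^(T-t) * (m^t * l^t)"
      using assms by (simp add: mult_right_mono)
    then show "m^T * l^t \<le> l^T * m^t"
      by (subst (1 2) tT, simp only: power_add) (simp add: algebra_simps)
  qed
  also have "\<dots> = l^T * (\<Sum>t<T. m^t)" by (simp add: sum_distrib_left)
  finally show ?thesis .
qed

theorem lemma3p14:
  fixes B :: "real^'n^'n" and T :: nat and \<alpha> :: real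
  assumes "symmetric_mat B" and "psd B"
    and "T \<ge> 1" and "\<alpha> > 0" and "\<alpha> * rho B < 1"
  defines "C \<equiv> (\<Sum>t<T. matpow (mat 1 - \<alpha> *\<^sub>R B) t)"
  defines "M \<equiv> matrix_inv C ** matpow (mat 1 - \<alpha> *\<^sub>R B) T"
  defines "N \<equiv> (1 / \<alpha>) *\<^sub>R (matrix_inv C - M)"
  shows "invertible C \<and> symmetric_mat C \<and> symmetric_mat N \<and> psd N
         \<and> symmetric_mat M \<and> pd M
         \<and> loewner_le (((1 - \<alpha> * rho B) ^ T / (\<Sum>t<T. (1 - \<alpha> * rho B) ^ t)) *\<^sub>R mat 1) M
         \<and> loewner_le M ((1 / real T) *\<^sub>R mat 1)"
proof -
  define A where "A = mat 1 - \<alpha> *\<^sub>R B"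
  have symB: "transpose B = B" using assms(1) by (simp add: symmetric_mat_def)
  have symA: "transpose A = A" using symB by (simp add: A_def tr_diff transpose_scalar transpose_mat)
  define \<mu> where "\<mu> = 1 - \<alpha> * rho B"
  have mu0: "\<mu> > 0" using assms(5) by (simp add: \<mu>_def)
  have eig: "\<mu> \<le> l \<and> l \<le> 1" if "v \<noteq> 0" "A *v v = l *\<^sub>R v" for v l
    using eig_bound[OF assms(1,2,4) that[unfolded A_def]] by (simp add: \<mu>_def)
  have app: "c * (x \<bullet> x) \<le> x \<bullet> (Q *v x)"
    if sQ: "transpose Q = Q" and cQ: "\<And>y. A *v (Q *v y) = Q *v (A *v y)"
      and eQ: "\<And>v l. v \<noteq> 0 \<Longrightarrow> A *v v = l *\<^sub>R v \<Longrightarrow> Q *v v = q l *\<^sub>R v"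
      and bQ: "\<And>l. \<mu> \<le> l \<Longrightarrow> l \<le> 1 \<Longrightarrow> c \<le> q l"
    for Q q c and x :: "real^'n"
  proof (rule mainlem[OF symA sQ cQ])
    fix v l m assume v: "v \<noteq> 0" and Av: "A *v v = l *\<^sub>R v" and Qv: "Q *v v = m *\<^sub>R v"
    have "q l *\<^sub>R v = m *\<^sub>R v" using eQ[OF v Av] Qv by metis
    then have "m = q l" using v by auto
    then show "c \<le> m" using bQ eig[OF v Av] by simp
  qed
  define s where "s l = (\<Sum>t<T. l^t)" for l :: real
  have s1: "1 \<le> s l" if "\<mu> \<le> l" for l using R1[of l T] that mu0 assms(3) by (simp add: s_def)
  have AC: "C = (\<Sum>t<T. matpow A t)" by (simp add: C_def A_def)
  have Cx: "C *v x = (\<Sum>t<T. matpow A t *v x)" for x by (simp add: AC mv_sum)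
  have symC: "transpose C = C" by (simp add: AC tr_sum mp_sym[OF symA])
  have Ccomm: "X *v (C *v x) = C *v (X *v x)" if "\<And>y. X *v (A *v y) = A *v (X *v y)" for X x
    by (simp add: Cx vec.sum comm_pow[OF that])
  have CA: "A *v (C *v x) = C *v (A *v x)" for x by (rule Ccomm) simp
  have Ceig: "C *v v = s l *\<^sub>R v" if "A *v v = l *\<^sub>R v" for v l
    by (simp add: Cx mp_eig[OF that] s_def scaleR_sum_left)
  have Cpos: "1 * (x \<bullet> x) \<le> x \<bullet> (C *v x)" for x
    by (rule app[OF symC CA, of s]) (auto simp: Ceig s1)
  have invC: "invertible C"
    unfolding invertible_left_inverse matrix_left_invertible_ker
  proof (intro allI impI)
    fix x assume "C *v x = 0"
    then have "x \<bullet> x \<le> 0" using Cpos[of x] by simp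
    then have "x \<bullet> x = 0" using inner_ge_zero[of x] by linarith
    then show "x = 0" by simp
  qed
  define Ci where "Ci = matrix_inv C"
  have CCi: "C ** Ci = mat 1 \<and> Ci ** C = mat 1"
    using invC unfolding Ci_def matrix_inv_def invertible_def by (rule someI_ex)
  have CiCx: "Ci *v (C *v x) = x" and CCix: "C *v (Ci *v x) = x" for x
    using CCi by (simp_all add: matrix_vector_mul_assoc)
  have Cicomm: "X *v (Ci *v x) = Ci *v (X *v x)" if "\<And>y. X *v (C *v y) = C *v (X *v y)" for X x
  proof -
    have "X *v (Ci *v x) = Ci *v (C *v (X *v (Ci *v x)))" by (simp add: CiCx)
    also have "\<dots> = Ci *v (X *v (C *v (Ci *v x)))" by (simp add: that)
    also have "\<dots> = Ci *v (X *v x)" by (simp add: CCix)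
    finally show ?thesis .
  qed
  have symCi: "transpose Ci = Ci"
  proof -
    have "transpose Ci ** C = mat 1"
      using CCi symC by (metis matrix_transpose_mul transpose_mat)
    then have "transpose Ci ** C ** Ci = Ci" by (simp add: matrix_mul_lid)
    then show ?thesis using CCi by (simp add: matrix_mul_rid flip: matrix_mul_assoc)
  qed
  have Cieig: "Ci *v v = (1 / s l) *\<^sub>R v" if "v \<noteq> 0" "A *v v = l *\<^sub>R v" for v l
  proof -
    have sp: "s l \<noteq> 0" using s1 eig[OF that] by (smt (verit))
    have "v = Ci *v (C *v v)" by (simp add: CiCx)
    also have "\<dots> = s l *\<^sub>R (Ci *v v)" by (simp add: Ceig[OF that(2)] mv_scaleR)
    finally have "(1 / s l) *\<^sub>R v = (1 / s l) *\<^sub>R (s l *\<^sub>R (Ci *v v))" by simp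
    then show ?thesis using sp by simp
  qed
  define AT where "AT = matpow A T"
  have ATA: "AT *v (A *v y) = A *v (AT *v y)" for y
    unfolding AT_def by (rule comm_pow[symmetric]) simp
  have ATC: "AT *v (C *v y) = C *v (AT *v y)" for y by (rule Ccomm[OF ATA])
  have symAT: "transpose AT = AT" unfolding AT_def by (rule mp_sym[OF symA])
  have MAT: "M = Ci ** AT" by (simp add: M_def Ci_def AT_def A_def)
  have Mx: "M *v x = Ci *v (AT *v x)" for x by (simp add: MAT matrix_vector_mul_assoc)
  have symM: "transpose M = M"
  proof -
    have "AT ** Ci = Ci ** AT"
      unfolding matrix_eq using Cicomm[OF ATC] by (simp flip: matrix_vector_mul_assoc)
    then show ?thesis by (simp add: MAT matrix_transpose_mul symAT symCi)
  qed
  have MA: "A *v (M *v y) = M *v (A *v y)" for y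
    by (simp add: Mx Cicomm[OF CA] ATA)
  have Meig: "M *v v = (l^T / s l) *\<^sub>R v" if "v \<noteq> 0" "A *v v = l *\<^sub>R v" for v l
    by (simp add: Mx AT_def mp_eig[OF that(2)] mv_scaleR Cieig[OF that])
  have Nx: "N *v x = (1/\<alpha>) *\<^sub>R (Ci *v x - M *v x)" for x
    by (simp add: N_def Ci_def mv_scale mv_diff)
  have symN: "transpose N = N" by (simp add: N_def transpose_scalar tr_diff symM symCi[unfolded Ci_def])
  have NA: "A *v (N *v y) = N *v (A *v y)" for y
    by (simp add: Nx mv_scaleR vec.diff MA Cicomm[OF CA])
  have Neig: "N *v v = ((1/\<alpha>) * (1 / s l - l^T / s l)) *\<^sub>R v" if "v \<noteq> 0" "A *v v = l *\<^sub>R v" for v l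
    by (simp add: Nx Meig[OF that] Cieig[OF that] algebra_simps)
  have Npsd: "0 * (x \<bullet> x) \<le> x \<bullet> (N *v x)" for x
  proof (rule app[OF symN NA Neig])
    fix l assume l: "\<mu> \<le> l" "l \<le> 1"
    have "l^T \<le> 1" using l mu0 by (simp add: power_le_one)
    moreover have "s l > 0" using s1[OF l(1)] by simp
    ultimately have "0 \<le> (1 - l^T) / s l" by simp
    then have "0 \<le> (1/\<alpha>) * ((1 - l^T) / s l)" using assms(4) by (intro mult_nonneg_nonneg) simp_all
    then show "0 \<le> (1/\<alpha>) * (1 / s l - l^T / s l)" by (simp only: diff_divide_distrib)
  qed
  define f where "f = \<mu>^T / s \<mu>"
  have f0: "f > 0" using mu0 s1[of \<mu>] by (simp add: f_def)
  have fdef': "(1 - \<alpha> * rho B) ^ T / (\<Sum>t<T. (1 - \<alpha> * rho B) ^ t) = f"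
    by (simp add: f_def s_def \<mu>_def)
  define Q1 where "Q1 = M - f *\<^sub>R mat 1"
  have Q1x: "Q1 *v x = M *v x - f *\<^sub>R x" for x by (simp add: Q1_def mv_diff mv_scale)
  have symQ1: "transpose Q1 = Q1" by (simp add: Q1_def tr_diff symM transpose_scalar transpose_mat)
  have Q1A: "A *v (Q1 *v y) = Q1 *v (A *v y)" for y by (simp add: Q1x vec.diff MA mv_scaleR)
  have Q1pos: "0 * (x \<bullet> x) \<le> x \<bullet> (Q1 *v x)" for x
  proof (rule app[OF symQ1 Q1A, of "\<lambda>l. l^T / s l - f"])
    fix v l assume "v \<noteq> 0" "A *v v = l *\<^sub>R v"
    then show "Q1 *v v = (l^T / s l - f) *\<^sub>R v" by (simp add: Q1x Meig algebra_simps)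
  next
    fix l assume l: "\<mu> \<le> l" "l \<le> 1"
    have sl: "s l > 0" "s \<mu> > 0" using s1[OF l(1)] s1[of \<mu>] by auto
    have "\<mu>^T * s l \<le> l^T * s \<mu>" using R4[OF mu0 l(1), of T] by (simp add: s_def)
    then have "f \<le> l^T / s l" using sl by (simp add: f_def divide_simps mult.commute)
    then show "0 \<le> l^T / s l - f" by simp
  qed
  define Q2 where "Q2 = (1 / real T) *\<^sub>R mat 1 - M"
  have Q2x: "Q2 *v x = (1 / real T) *\<^sub>R x - M *v x" for x by (simp add: Q2_def mv_diff mv_scale)
  have symQ2: "transpose Q2 = Q2" by (simp add: Q2_def tr_diff symM transpose_scalar transpose_mat)
  have Q2A: "A *v (Q2 *v y) = Q2 *v (A *v y)" for y by (simp add: Q2x vec.diff MA mv_scaleR)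
  have Q2pos: "0 * (x \<bullet> x) \<le> x \<bullet> (Q2 *v x)" for x
  proof (rule app[OF symQ2 Q2A, of "\<lambda>l. 1 / real T - l^T / s l"])
    fix v l assume "v \<noteq> 0" "A *v v = l *\<^sub>R v"
    then show "Q2 *v v = (1 / real T - l^T / s l) *\<^sub>R v" by (simp add: Q2x Meig algebra_simps)
  next
    fix l assume l: "\<mu> \<le> l" "l \<le> 1"
    have sl: "s l > 0" using s1[OF l(1)] by auto
    have T0: "real T > 0" using assms(3) by simp
    have "real T * l^T \<le> s l" using R3[of l T] l mu0 by (simp add: s_def)
    then have "l^T / s l \<le> 1 / real T" using sl T0 by (simp add: divide_simps mult.commute)
    then show "0 \<le> 1 / real T - l^T / s l" by simp
  qed
  have pdM: "pd M"
    unfolding pd_def symmetric_mat_def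
  proof (intro conjI symM allI impI)
    fix x :: "real^'n" assume "x \<noteq> 0"
    then have "0 < f * (x \<bullet> x)" using f0 by simp
    also have "\<dots> \<le> x \<bullet> (M *v x)" using Q1pos[of x] by (simp add: Q1x inner_diff_right)
    finally show "0 < x \<bullet> (M *v x)" .
  qed
  show ?thesis
    unfolding fdef'
    using invC symC symN Npsd symM pdM Q1pos Q2pos symQ1 symQ2
    by (simp add: symmetric_mat_def psd_def loewner_le_def Q1_def Q2_def Ci_def)
qed

end
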